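(* Let $p\in\mathbb{R}$ and $K:=\{z=(v,m,\sigma,e)\in Z: v\otimes v-\sigma=e\,\mathrm{Id},\ m=(e+p)v\}$. For any $z_1,z_2\in K$ with $z_1\ne z_2$ one has $z_2-z_1\in\Lambda$.
   Context: $\mathcal S_0^{2\times2}$ is the space of traceless symmetric $2\times2$ matrices, $Z:=\mathbb{R}^2\times\mathbb{R}^2\times\mathcal S_0^{2\times2}\times\mathbb{R}$. The wave cone is $\Lambda=\{\bar z=(\bar v,\bar m,\bar\sigma,\bar e)\in Z:\ (\bar v,\bar e)\neq0\text{ and there is }0\ne(\xi,c)\in\mathbb{R}^2\times\mathbb{R}\text{ with }(\bar\sigma+\bar e\,\mathrm{Id})\xi+c\bar v=0,\ \bar v\cdot\xi=0,\ \bar m\cdot\xi+c\bar e=0\}$. *)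

theory Defs
  imports "HOL-Analysis.Analysis"
begin

type_synonym zvec = "(real^2) \<times> (real^2) \<times> (real^2^2) \<times> real"

definition in_Z :: "zvec \<Rightarrow> bool" where
  "in_Z z = (case z of (v, m, \<sigma>, e) \<Rightarrow> transpose \<sigma> = \<sigma> \<and> trace \<sigma> = 0)"

definition outer :: "real^2 \<Rightarrow> real^2 \<Rightarrow> real^2^2" where
  "outer a b = (\<chi> i j. a $ i * b $ j)"

definition K_set :: "real \<Rightarrow> zvec set" where
  "K_set p = {z. in_Z z \<and> (case z of (v, m, \<sigma>, e) \<Rightarrow>
      outer v v - \<sigma> = e *\<^sub>R mat 1 \<and> m = (e + p) *\<^sub>R v)}"

definition wave_cone :: "zvec set" where
  "wave_cone = {z. in_Z z \<and> (case z of (v, m, \<sigma>, e) \<Rightarrow>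
      (v, e) \<noteq> (0, 0) \<and>
      (\<exists>\<xi> :: real^2. \<exists>c :: real. (\<xi>, c) \<noteq> (0, 0) \<and>
         (\<sigma> + e *\<^sub>R mat 1) *v \<xi> + c *\<^sub>R v = 0 \<and>
         v \<bullet> \<xi> = 0 \<and> m \<bullet> \<xi> + c * e = 0))}"

end

theory Submission
  imports Defs
begin

lemma K_char:
  assumes "(v, m, s, e) \<in> K_set p"
  shows "transpose s = s" "trace s = 0" "\<And>i j. (s$i)$j = (v$i)*(v$j) - (if i = j then e else 0)"
    "e = ((v$1)*(v$1) + (v$2)*(v$2))/2" "m = (e+p) *\<^sub>R v"
proof -
  have A: "transpose s = s" "trace s = 0" "outer v v - s = e *\<^sub>R mat 1" "m = (e+p) *\<^sub>R v"
    using assms by (auto simp: K_set_def in_Z_def)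
  show "transpose s = s" "trace s = 0" "m = (e+p) *\<^sub>R v" using A by auto
  show S: "\<And>i j. (s$i)$j = (v$i)*(v$j) - (if i = j then e else 0)"
  proof -
    fix i j
    have "((outer v v - s)$i)$j = ((e *\<^sub>R mat 1 :: real^2^2)$i)$j" using A(3) by simp
    then show "(s$i)$j = (v$i)*(v$j) - (if i = j then e else 0)"
      by (auto simp: outer_def mat_def)
  qed
  have "0 = (s$1)$1 + (s$2)$2" using A(2) by (simp add: trace_def sum_2)
  then show "e = ((v$1)*(v$1) + (v$2)*(v$2))/2" using S[of 1 1] S[of 2 2] by simp
qed

theorem lemma2p3:
  fixes p :: real and z1 z2 :: zvec
  assumes "z1 \<in> K_set p" and "z2 \<in> K_set p" and "z1 \<noteq> z2"
  shows "z2 - z1 \<in> wave_cone"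
proof -
  obtain v1 m1 s1 e1 where z1: "z1 = (v1, m1, s1, e1)" by (cases z1) auto
  obtain v2 m2 s2 e2 where z2: "z2 = (v2, m2, s2, e2)" by (cases z2) auto
  note k1 = K_char[OF assms(1)[unfolded z1]]
  note k2 = K_char[OF assms(2)[unfolded z2]]
  define d where "d = v2 - v1"
  have dne: "d \<noteq> 0"
  proof
    assume "d = 0"
    then have "v1 = v2" by (simp add: d_def)
    moreover have "s1 = s2" using k1(3) k2(3) k1(4) k2(4) \<open>v1 = v2\<close>
      by (simp add: vec_eq_iff)
    ultimately show False using assms(3) z1 z2 k1 k2 by auto
  qed
  define \<xi> :: "real^2" where "\<xi> = (\<chi> i. if i = 1 then - d$2 else d$1)"
  define c where "c = - (v1 \<bullet> \<xi>)"
  have d12: "d$1 \<noteq> 0 \<or> d$2 \<noteq> 0" using dne by (auto simp: vec_eq_iff forall_2)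
  have xine: "(\<xi>, c) \<noteq> (0, 0)" using d12 by (auto simp: \<xi>_def vec_eq_iff forall_2)
  have inZ: "in_Z (z2 - z1)" using k1(1,2) k2(1,2)
    by (simp add: z1 z2 in_Z_def transpose_def vec_eq_iff trace_def sum_subtractf)
  have nz: "\<xi> = 0 \<longrightarrow> c \<noteq> 0" using xine by auto
  have E1: "(s2 - s1 + (e2 - e1) *\<^sub>R mat 1) *v \<xi> + c *\<^sub>R d = 0"
  proof -
    have a: "s1$1$1 = v1$1 * v1$1 - e1" "s1$1$2 = v1$1 * v1$2" "s1$2$1 = v1$2 * v1$1" "s1$2$2 = v1$2 * v1$2 - e1"
      "s2$1$1 = v2$1 * v2$1 - e2" "s2$1$2 = v2$1 * v2$2" "s2$2$1 = v2$2 * v2$1" "s2$2$2 = v2$2 * v2$2 - e2"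
      using k1(3)[of 1 1] k1(3)[of 1 2] k1(3)[of 2 1] k1(3)[of 2 2]
        k2(3)[of 1 1] k2(3)[of 1 2] k2(3)[of 2 1] k2(3)[of 2 2] by simp_all
    show ?thesis
      by (simp add: a vec_eq_iff forall_2 matrix_vector_mult_def sum_2 inner_vec_def
        \<xi>_def c_def d_def mat_def algebra_simps)
  qed
  have E2: "d \<bullet> \<xi> = 0"
    by (simp add: inner_vec_def sum_2 \<xi>_def algebra_simps)
  have E3: "(m2 - m1) \<bullet> \<xi> + c * (e2 - e1) = 0"
    using k1(5) k2(5)
    by (simp add: inner_vec_def sum_2 \<xi>_def c_def d_def algebra_simps)
  show ?thesis
    unfolding wave_cone_def z1 z2
    using inZ[unfolded z1 z2] dne nz E1 E2 E3
    by (auto simp: d_def[symmetric])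
qed

end
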